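(* Let $\mathbb{A}=(a_{i_1\ldots i_m})\in T_{m,n}$ be a tensor such that, whenever $a_{i_1\ldots i_m}>0$ and $(i_1,\ldots,i_m)$ is not of the form $(i,\ldots,i)$, we have $a_{i_1\ldots i_m}=a_{i_{\sigma(1)}\ldots i_{\sigma(m)}}$ for every permutation $\sigma$ of $\{1,\ldots,m\}$. (1) If $\mathbb{A}$ is a $B_0$ tensor, then either $\mathbb{A}$ is itself a diagonally dominated $Z$ tensor, or $$\mathbb{A}=\mathbb{M}+\sum_{k=1}^s h_k\mathcal{E}^{J_k},$$ where $\mathbb{M}\in T_{m,n}$ is a diagonally dominated $Z$ tensor, $s$ is a positive integer, $h_k>0$ and $J_k\subseteq[n]$ for $k=1,\ldots,s$, and $J_s\subsetneqq J_{s-1}\subsetneqq\cdots\subsetneqq J_1$. (2) If $\mathbb{A}$ is a $B$ tensor, then either $\mathbb{A}$ is itself a strictly diagonally dominated $Z$ tensor, or $\mathbb{A}$ admits a decomposition as in (1) in which $\mathbb{M}$ is a strictly diagonally dominated $Z$ tensor.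
   Context: $T_{m,n}$ denotes the set of real $m$th order $n$-dimensional tensors $\mathbb{A}=(a_{i_1i_2\ldots i_m})$ with $i_j\in[n]=\{1,\ldots,n\}$. $\mathbb{A}$ is a $Z$ tensor if $a_{i_1\ldots i_m}\le0$ whenever $(i_1,\ldots,i_m)$ is not of the form $(i,\ldots,i)$. $\mathbb{A}$ is diagonally dominated if for all $i\in[n]$, $a_{i\ldots i}\ge\sum\{|a_{ii_2\ldots i_m}|:(i_2,\ldots,i_m)\ne(i,\ldots,i)\}$, and strictly diagonally dominated if this holds with strict inequality for all $i$. $\mathbb{A}$ is a $B$ tensor if for all $i\in[n]$, $\sum_{i_2,\ldots,i_m=1}^n a_{ii_2\ldots i_m}>0$ and $\frac{1}{n^{m-1}}\sum_{i_2,\ldots,i_m=1}^n a_{ii_2\ldots i_m}>a_{ij_2\ldots j_m}$ for all $(j_2,\ldots,j_m)\neq(i,\ldots,i)$; $\mathbb{A}$ is a $B_0$ tensor if the same two conditions hold with $\ge$ in place of $>$. For $J\subseteq[n]$, the partially all one tensor $\mathcal{E}^J\in T_{m,n}$ has entry $1$ at $(i_1,\ldots,i_m)$ if $i_1,\ldots,i_m\in J$ and $0$ otherwise. *)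

theory Defs
  imports Complex_Main "HOL-Combinatorics.Permutations"
begin

text \<open>A real m-th order n-dimensional tensor is represented as a function on index
lists; only its values on tensor_idx m n (lists of length m with entries in {1..n})
are relevant.\<close>

type_synonym tensor = "nat list \<Rightarrow> real"

definition tensor_idx :: "nat \<Rightarrow> nat \<Rightarrow> nat list set" where
  "tensor_idx m n = {xs. length xs = m \<and> set xs \<subseteq> {1..n}}"

definition is_diag_idx :: "nat \<Rightarrow> nat list \<Rightarrow> bool" where
  "is_diag_idx m xs \<longleftrightarrow> (\<exists>i. xs = replicate m i)"

definition permute_idx :: "nat \<Rightarrow> (nat \<Rightarrow> nat) \<Rightarrow> nat list \<Rightarrow> nat list" where
  "permute_idx m \<sigma> xs = map (\<lambda>j. xs ! \<sigma> j) [0..<m]"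

definition Z_tensor :: "nat \<Rightarrow> nat \<Rightarrow> tensor \<Rightarrow> bool" where
  "Z_tensor m n A \<longleftrightarrow> (\<forall>xs\<in>tensor_idx m n. \<not> is_diag_idx m xs \<longrightarrow> A xs \<le> 0)"

definition diag_dominated :: "nat \<Rightarrow> nat \<Rightarrow> tensor \<Rightarrow> bool" where
  "diag_dominated m n A \<longleftrightarrow> (\<forall>i\<in>{1..n}.
     A (replicate m i) \<ge>
       (\<Sum>ys\<in>tensor_idx (m - 1) n - {replicate (m - 1) i}. \<bar>A (i # ys)\<bar>))"

definition strictly_diag_dominated :: "nat \<Rightarrow> nat \<Rightarrow> tensor \<Rightarrow> bool" where
  "strictly_diag_dominated m n A \<longleftrightarrow> (\<forall>i\<in>{1..n}.
     A (replicate m i) >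
       (\<Sum>ys\<in>tensor_idx (m - 1) n - {replicate (m - 1) i}. \<bar>A (i # ys)\<bar>))"

definition B_tensor :: "nat \<Rightarrow> nat \<Rightarrow> tensor \<Rightarrow> bool" where
  "B_tensor m n A \<longleftrightarrow> (\<forall>i\<in>{1..n}.
     (\<Sum>ys\<in>tensor_idx (m - 1) n. A (i # ys)) > 0 \<and>
     (\<forall>ys\<in>tensor_idx (m - 1) n. ys \<noteq> replicate (m - 1) i \<longrightarrow>
        (\<Sum>zs\<in>tensor_idx (m - 1) n. A (i # zs)) / real n ^ (m - 1) > A (i # ys)))"

definition B0_tensor :: "nat \<Rightarrow> nat \<Rightarrow> tensor \<Rightarrow> bool" where
  "B0_tensor m n A \<longleftrightarrow> (\<forall>i\<in>{1..n}.
     (\<Sum>ys\<in>tensor_idx (m - 1) n. A (i # ys)) \<ge> 0 \<and>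
     (\<forall>ys\<in>tensor_idx (m - 1) n. ys \<noteq> replicate (m - 1) i \<longrightarrow>
        (\<Sum>zs\<in>tensor_idx (m - 1) n. A (i # zs)) / real n ^ (m - 1) \<ge> A (i # ys)))"

definition all_one_tensor :: "nat set \<Rightarrow> tensor" where
  "all_one_tensor J xs = (if set xs \<subseteq> J then 1 else 0)"

definition decomposes :: "nat \<Rightarrow> nat \<Rightarrow> tensor \<Rightarrow> tensor \<Rightarrow> bool" where
  "decomposes m n A M \<longleftrightarrow> (\<exists>(s::nat) (h::nat \<Rightarrow> real) (J::nat \<Rightarrow> nat set).
     s > 0 \<and> (\<forall>k\<in>{1..s}. h k > 0 \<and> J k \<subseteq> {1..n}) \<and>
     (\<forall>k\<in>{1..<s}. J (Suc k) \<subset> J k) \<and>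
     (\<forall>xs\<in>tensor_idx m n. A xs = M xs + (\<Sum>k=1..s. h k * all_one_tensor (J k) xs)))"

end

theory Submission
  imports Defs
begin

lemma decomp_aux:
  fixes I :: "nat set"
  assumes "finite I"
  shows "\<forall>r::nat\<Rightarrow>real. card {i\<in>I. r i > 0} = N \<longrightarrow> (\<forall>i\<in>I. r i \<ge> 0) \<longrightarrow>
    (\<exists>(s::nat) (h::nat\<Rightarrow>real) (J::nat\<Rightarrow>nat set). (\<forall>k\<in>{1..s}. h k > 0 \<and> J k \<subseteq> {i\<in>I. r i > 0}) \<and>
       (\<forall>k\<in>{1..<s}. J (Suc k) \<subset> J k) \<and>
       (\<forall>X. X \<subseteq> I \<longrightarrow> X \<noteq> {} \<longrightarrow>
           (\<Sum>k=1..s. h k * (if X \<subseteq> J k then 1 else 0)) = Min (r ` X)))"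
proof (induction N rule: less_induct)
  case (less N)
  show ?case
  proof (intro allI impI)
    fix r :: "nat \<Rightarrow> real"
    assume cN: "card {i\<in>I. r i > 0} = N" and nn: "\<forall>i\<in>I. r i \<ge> 0"
    define P where "P = {i\<in>I. r i > 0}"
    have finP: "finite P" using assms by (simp add: P_def)
    show "\<exists>s h J. (\<forall>k\<in>{1..s}. h k > 0 \<and> J k \<subseteq> {i\<in>I. r i > 0}) \<and>
       (\<forall>k\<in>{1..<s}. J (Suc k) \<subset> J k) \<and>
       (\<forall>X. X \<subseteq> I \<longrightarrow> X \<noteq> {} \<longrightarrow>
           (\<Sum>k=1..s. h k * (if X \<subseteq> J k then 1 else 0)) = Min (r ` X))"
    proof (cases "P = {}")
      case True
      have "Min (r ` X) = 0" if "X \<subseteq> I" "X \<noteq> {}" for X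
      proof -
        have "\<forall>x\<in>X. r x = 0" using True nn that unfolding P_def by force
        hence "r ` X = {0}" using that(2) by auto
        thus ?thesis by simp
      qed
      thus ?thesis by (intro exI[of _ 0]) auto
    next
      case False
      define a where "a = Min (r ` P)"
      have aP: "a \<in> r ` P" unfolding a_def using False finP by simp
      then obtain i0 where i0: "i0 \<in> P" "r i0 = a" by auto
      have apos: "a > 0" using i0 unfolding P_def by auto
      have ale: "\<And>i. i \<in> P \<Longrightarrow> a \<le> r i" unfolding a_def using finP by simp
      define r' where "r' = (\<lambda>i. max 0 (r i - a))"
      have P': "{i\<in>I. r' i > 0} \<subseteq> P - {i0}"
        unfolding r'_def P_def using i0 apos by auto
      have lt: "card {i\<in>I. r' i > 0} < N"
      proof -
        have "card {i\<in>I. r' i > 0} \<le> card (P - {i0})"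
          using P' finP by (intro card_mono) auto
        also have "\<dots> < card P" using i0 finP by (metis card_Diff1_less)
        finally show ?thesis using cN P_def by simp
      qed
      have nn': "\<forall>i\<in>I. r' i \<ge> 0" unfolding r'_def by simp
      obtain s h J where
        h1: "\<forall>k\<in>{1..s}. h k > 0 \<and> J k \<subseteq> {i\<in>I. r' i > 0}" and
        h2: "\<forall>k\<in>{1..<s}. J (Suc k) \<subset> J k" and
        h3: "\<forall>X. X \<subseteq> I \<longrightarrow> X \<noteq> {} \<longrightarrow>
           (\<Sum>k=1..s. h k * (if X \<subseteq> J k then 1 else 0)) = Min (r' ` X)"
        using mp[OF mp[OF spec[OF less.IH[OF lt], of r'] refl] nn'] by blast
      define h2 where "h2 = (\<lambda>k. if k = 1 then a else h (k - 1))"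
      define J2 where "J2 = (\<lambda>k. if k = 1 then P else J (k - 1))"
      show ?thesis
      proof (intro exI[of _ "Suc s"] exI[of _ h2] exI[of _ J2] conjI allI impI ballI)
        fix k assume k: "k \<in> {1..Suc s}"
        show "h2 k > 0"
        proof (cases "k = 1")
          case True then show ?thesis using apos h2_def by simp
        next
          case False hence "k - 1 \<in> {1..s}" using k by auto
          thus ?thesis using h1 False unfolding h2_def by auto
        qed
        show "J2 k \<subseteq> {i \<in> I. r i > 0}"
        proof (cases "k = 1")
          case True then show ?thesis unfolding J2_def P_def by simp
        next
          case False hence "k - 1 \<in> {1..s}" using k by auto
          hence "J (k - 1) \<subseteq> P" using h1 P' by blast
          thus ?thesis using False unfolding J2_def P_def by simp
        qed
      next
        fix k assume k: "k \<in> {1..<Suc s}"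
        show "J2 (Suc k) \<subset> J2 k"
        proof (cases "k = 1")
          case True
          hence "1 \<in> {1..s}" using k by auto
          hence "J 1 \<subseteq> P - {i0}" using h1 P' by blast
          then show ?thesis using True i0 unfolding J2_def by auto
        next
          case False
          hence k1: "k - 1 \<in> {1..<s}" using k by auto
          have "Suc (k - 1) = k" using False k by auto
          then show ?thesis using False h2[rule_format, OF k1] unfolding J2_def by simp
        qed
      next
        fix X assume XI: "X \<subseteq> I" and Xne: "X \<noteq> {}"
        have finX: "finite X" using XI assms finite_subset by blast
        have "(\<Sum>k=1..Suc s. h2 k * (if X \<subseteq> J2 k then 1 else 0))
            = h2 1 * (if X \<subseteq> J2 1 then 1 else 0) + (\<Sum>k=Suc 1..Suc s. h2 k * (if X \<subseteq> J2 k then 1 else 0))"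
          by (simp add: sum.atLeast_Suc_atMost)
        also have "(\<Sum>k=Suc 1..Suc s. h2 k * (if X \<subseteq> J2 k then 1 else 0))
            = (\<Sum>k=1..s. h2 (Suc k) * (if X \<subseteq> J2 (Suc k) then 1 else 0))"
          by (rule sum.shift_bounds_cl_Suc_ivl)
        also have "\<dots> = (\<Sum>k=1..s. h k * (if X \<subseteq> J k then 1 else 0))"
          unfolding h2_def J2_def by simp
        also have "\<dots> = Min (r' ` X)" using h3 XI Xne by blast
        finally have eq: "(\<Sum>k=1..Suc s. h2 k * (if X \<subseteq> J2 k then 1 else 0))
           = a * (if X \<subseteq> P then 1 else 0) + Min (r' ` X)" unfolding h2_def J2_def by simp
        show "(\<Sum>k=1..Suc s. h2 k * (if X \<subseteq> J2 k then 1 else 0)) = Min (r ` X)"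
        proof (cases "X \<subseteq> P")
          case True
          have "r' ` X = (\<lambda>y. y - a) ` r ` X"
            using True ale unfolding r'_def by (force simp: image_image)
          hence "Min (r' ` X) = Min (r ` X) - a"
          proof -
            assume e: "r' ` X = (\<lambda>y. y - a) ` r ` X"
            have "mono (\<lambda>y::real. y - a)" by (simp add: mono_def)
            hence "Min ((\<lambda>y. y - a) ` r ` X) = Min (r ` X) - a"
              using mono_Min_commute[of "\<lambda>y. y - a" "r ` X"] finX Xne by simp
            thus ?thesis using e by simp
          qed
          thus ?thesis using eq True by simp
        next
          case False
          then obtain x where x: "x \<in> X" "x \<notin> P" by auto
          have rx: "r x = 0" using x XI nn unfolding P_def by force
          have "Min (r ` X) = 0"
          proof (rule antisym)
            have "r x \<in> r ` X" using x by blast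
            thus "Min (r ` X) \<le> 0" using rx finX by (simp add: Min_le)
            have "\<forall>y\<in>r ` X. 0 \<le> y" using XI nn by blast
            thus "0 \<le> Min (r ` X)" using finX Xne by (simp add: Min_ge_iff)
          qed
          moreover have "Min (r' ` X) = 0"
          proof (rule antisym)
            have "r' x = 0" using rx apos unfolding r'_def by simp
            moreover have "r' x \<in> r' ` X" using x by blast
            ultimately show "Min (r' ` X) \<le> 0" using finX by (metis Min_le finite_imageI)
            show "0 \<le> Min (r' ` X)" using finX Xne unfolding r'_def by (simp add: Min_ge_iff)
          qed
          ultimately show ?thesis using eq False by simp
        qed
      qed
    qed
  qed
qed


lemma decomp_exists:
  fixes I :: "nat set" and r :: "nat \<Rightarrow> real"
  assumes "finite I" "\<forall>i\<in>I. r i \<ge> 0"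
  shows "\<exists>(s::nat) (h::nat\<Rightarrow>real) (J::nat\<Rightarrow>nat set). (\<forall>k\<in>{1..s}. h k > 0 \<and> J k \<subseteq> {i\<in>I. r i > 0}) \<and>
       (\<forall>k\<in>{1..<s}. J (Suc k) \<subset> J k) \<and>
       (\<forall>X. X \<subseteq> I \<longrightarrow> X \<noteq> {} \<longrightarrow>
           (\<Sum>k=1..s. h k * (if X \<subseteq> J k then 1 else 0)) = Min (r ` X))"
  by (rule mp[OF mp[OF spec[OF decomp_aux[OF assms(1), where N="card {i\<in>I. r i > 0}"], of r] refl] assms(2)])

lemma tensor_idx_eq: "tensor_idx k n = {xs. set xs \<subseteq> {1..n} \<and> length xs = k}"
  unfolding tensor_idx_def by auto

lemma finite_tensor_idx: "finite (tensor_idx k n)"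
  unfolding tensor_idx_eq by (rule finite_lists_length_eq) simp

lemma card_tensor_idx: "card (tensor_idx k n) = n ^ k"
  unfolding tensor_idx_eq by (subst card_lists_length_eq) simp_all

lemma cons_tensor_idx:
  "1 \<le> m \<Longrightarrow> i \<in> {1..n} \<Longrightarrow> ys \<in> tensor_idx (m - 1) n \<Longrightarrow> i # ys \<in> tensor_idx m n"
  unfolding tensor_idx_def by auto

lemma rep_tensor_idx: "i \<in> {1..n} \<Longrightarrow> replicate k i \<in> tensor_idx k n"
  unfolding tensor_idx_def by auto

lemma replicate_Suc_pred: "1 \<le> m \<Longrightarrow> replicate m i = i # replicate (m - 1) i"
  by (cases m) auto

lemma cons_not_diag:
  assumes "1 \<le> m" "ys \<noteq> replicate (m - 1) i" "length ys = m - 1"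
  shows "\<not> is_diag_idx m (i # ys)"
proof
  assume "is_diag_idx m (i # ys)"
  then obtain c where c: "i # ys = replicate m c" unfolding is_diag_idx_def by blast
  hence "i # ys = c # replicate (m - 1) c" using assms(1) replicate_Suc_pred by metis
  thus False using assms(2) by simp
qed

lemma set_permute_idx:
  assumes "\<sigma> permutes {..<m}" "length xs = m"
  shows "set (permute_idx m \<sigma> xs) = set xs"
proof -
  have "set (permute_idx m \<sigma> xs) = (\<lambda>j. xs ! j) ` (\<sigma> ` {..<m})"
    unfolding permute_idx_def by (auto simp: image_image)
  also have "\<sigma> ` {..<m} = {..<m}" using assms(1) by (rule permutes_image)
  also have "(\<lambda>j. xs ! j) ` {..<m} = set xs" using assms(2) by (auto simp: set_conv_nth)
  finally show ?thesis .
qed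

lemma diag_iff_set:
  assumes "length xs = m"
  shows "is_diag_idx m xs \<longleftrightarrow> (\<exists>c. \<forall>y\<in>set xs. y = c)"
  unfolding is_diag_idx_def using assms
  by (metis in_set_replicate replicate_length_same)

lemma move_first:
  assumes m: "1 \<le> m" and xs: "xs \<in> tensor_idx m n" and nd: "\<not> is_diag_idx m xs"
    and j: "j \<in> set xs"
  shows "\<exists>\<sigma> ys. \<sigma> permutes {..<m} \<and> permute_idx m \<sigma> xs = j # ys \<and>
            ys \<in> tensor_idx (m - 1) n \<and> ys \<noteq> replicate (m - 1) j"
proof -
  have len: "length xs = m" using xs unfolding tensor_idx_def by auto
  obtain p where p: "p < m" "xs ! p = j" using j len by (auto simp: in_set_conv_nth)
  define \<sigma> where "\<sigma> = Transposition.transpose 0 p"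
  have sp: "\<sigma> permutes {..<m}" unfolding \<sigma>_def using p m by (intro permutes_swap_id) auto
  define zs where "zs = permute_idx m \<sigma> xs"
  have lz: "length zs = m" unfolding zs_def permute_idx_def by simp
  have z0: "zs ! 0 = j" unfolding zs_def permute_idx_def \<sigma>_def using m p by simp
  have sz: "set zs = set xs" unfolding zs_def using sp len by (rule set_permute_idx)
  have zeq: "zs = j # tl zs" using lz z0 m by (cases zs) auto
  have tlT: "tl zs \<in> tensor_idx (m - 1) n"
  proof -
    have "set (tl zs) \<subseteq> set zs" by (metis set_subset_Cons zeq)
    thus ?thesis using lz sz xs unfolding tensor_idx_def by auto
  qed
  have "tl zs \<noteq> replicate (m - 1) j"
  proof
    assume "tl zs = replicate (m - 1) j"
    hence "\<forall>y\<in>set zs. y = j" using zeq by (metis in_set_replicate set_ConsD)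
    hence "is_diag_idx m xs" using sz len diag_iff_set by metis
    thus False using nd by simp
  qed
  thus ?thesis using sp zeq tlT unfolding zs_def by blast
qed

lemma Z_cong: "\<forall>xs\<in>tensor_idx m n. M xs = A xs \<Longrightarrow> Z_tensor m n M = Z_tensor m n A"
  unfolding Z_tensor_def by auto

lemma dd_cong:
  assumes "1 \<le> m" "\<forall>xs\<in>tensor_idx m n. M xs = A xs"
  shows "diag_dominated m n M = diag_dominated m n A"
    "strictly_diag_dominated m n M = strictly_diag_dominated m n A"
proof -
  have e1: "M (replicate m i) = A (replicate m i)" if "i \<in> {1..n}" for i
    using assms rep_tensor_idx[OF that] by blast
  have e2: "(\<Sum>ys\<in>tensor_idx (m - 1) n - {replicate (m - 1) i}. \<bar>M (i # ys)\<bar>)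
      = (\<Sum>ys\<in>tensor_idx (m - 1) n - {replicate (m - 1) i}. \<bar>A (i # ys)\<bar>)" if "i \<in> {1..n}" for i
    using assms cons_tensor_idx[OF assms(1) that] by (intro sum.cong) auto
  show "diag_dominated m n M = diag_dominated m n A"
    unfolding diag_dominated_def using e1 e2 by simp
  show "strictly_diag_dominated m n M = strictly_diag_dominated m n A"
    unfolding strictly_diag_dominated_def using e1 e2 by simp
qed

theorem theorem4p3:
  fixes m n :: nat and A :: tensor
  assumes "1 \<le> m"
    and sym: "\<forall>xs\<in>tensor_idx m n. A xs > 0 \<and> \<not> is_diag_idx m xs \<longrightarrow>
                (\<forall>\<sigma>. \<sigma> permutes {..<m} \<longrightarrow> A (permute_idx m \<sigma> xs) = A xs)"
  shows "(B0_tensor m n A \<longrightarrow>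
            (Z_tensor m n A \<and> diag_dominated m n A) \<or>
            (\<exists>M. Z_tensor m n M \<and> diag_dominated m n M \<and> decomposes m n A M))
       \<and> (B_tensor m n A \<longrightarrow>
            (Z_tensor m n A \<and> strictly_diag_dominated m n A) \<or>
            (\<exists>M. Z_tensor m n M \<and> strictly_diag_dominated m n M \<and> decomposes m n A M))"
proof -
  note m = assms(1)
  define T where "T = tensor_idx (m - 1) n"
  define R where "R i = Max (insert 0 ((\<lambda>ys. A (i # ys)) ` (T - {replicate (m - 1) i})))" for i
  define M where "M xs = A xs - Min (R ` set xs)" for xs
  define S where "S i = (\<Sum>ys\<in>T. A (i # ys))" for i
  define N where "N = real (card T)"
  have finT: "finite T" unfolding T_def by (rule finite_tensor_idx)
  have N: "N = real n ^ (m - 1)" unfolding N_def T_def card_tensor_idx by simp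
  have fin_img: "finite (insert 0 ((\<lambda>ys. A (i # ys)) ` (T - {replicate (m - 1) i})))" for i
    using finT by simp
  have R_nn: "R i \<ge> 0" for i unfolding R_def using fin_img by simp
  have R_ge: "A (i # ys) \<le> R i" if "ys \<in> T" "ys \<noteq> replicate (m - 1) i" for i ys
    unfolding R_def using fin_img that by simp
  have R_le: "R i \<le> c" if "c \<ge> 0" "\<forall>ys\<in>T. ys \<noteq> replicate (m - 1) i \<longrightarrow> A (i # ys) \<le> c" for i c
    unfolding R_def using fin_img that by simp
  have setne: "set xs \<noteq> {}" "finite (set xs)" if "xs \<in> tensor_idx m n" for xs
    using that m unfolding tensor_idx_def by auto
  have setsub: "set xs \<subseteq> {1..n}" if "xs \<in> tensor_idx m n" for xs
    using that unfolding tensor_idx_def by auto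
  have M_nonpos: "M xs \<le> 0" if xs: "xs \<in> tensor_idx m n" and nd: "\<not> is_diag_idx m xs" for xs
  proof -
    have "\<forall>j\<in>set xs. A xs \<le> R j"
    proof
      fix j assume j: "j \<in> set xs"
      show "A xs \<le> R j"
      proof (cases "A xs > 0")
        case False then show ?thesis using R_nn[of j] by simp
      next
        case True
        obtain \<sigma> ys where s: "\<sigma> permutes {..<m}" "permute_idx m \<sigma> xs = j # ys"
          "ys \<in> tensor_idx (m - 1) n" "ys \<noteq> replicate (m - 1) j"
          using move_first[OF m xs nd j] by blast
        have "A (permute_idx m \<sigma> xs) = A xs" using sym xs True nd s(1) by blast
        hence "A xs = A (j # ys)" using s(2) by simp
        thus ?thesis using R_ge[of ys j] s(3,4) unfolding T_def by simp
      qed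
    qed
    hence "A xs \<le> Min (R ` set xs)" using setne[OF xs] by (simp add: Min_ge_iff)
    thus ?thesis unfolding M_def by simp
  qed
  have ZM: "Z_tensor m n M" unfolding Z_tensor_def using M_nonpos by blast
  have Mrep: "M (replicate m i) = A (replicate m i) - R i" for i
    unfolding M_def using m by simp
  have offsum: "(\<Sum>ys\<in>T - {replicate (m - 1) i}. \<bar>M (i # ys)\<bar>) \<le> N * R i - R i - (S i - A (replicate m i))"
    if i: "i \<in> {1..n}" for i
  proof -
    have repT: "replicate (m - 1) i \<in> T" unfolding T_def using rep_tensor_idx[OF i] .
    have "(\<Sum>ys\<in>T - {replicate (m - 1) i}. \<bar>M (i # ys)\<bar>) \<le> (\<Sum>ys\<in>T - {replicate (m - 1) i}. R i - A (i # ys))"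
    proof (rule sum_mono)
      fix ys assume ys: "ys \<in> T - {replicate (m - 1) i}"
      have iys: "i # ys \<in> tensor_idx m n" using cons_tensor_idx[OF m i] ys unfolding T_def by blast
      have lys: "length ys = m - 1" using ys unfolding T_def tensor_idx_def by auto
      have nd: "\<not> is_diag_idx m (i # ys)" using cons_not_diag[OF m _ lys] ys by blast
      have "\<bar>M (i # ys)\<bar> = - M (i # ys)" using M_nonpos[OF iys nd] by simp
      also have "\<dots> = Min (R ` set (i # ys)) - A (i # ys)" unfolding M_def by simp
      also have "Min (R ` set (i # ys)) \<le> R i" by (simp add: Min_le)
      finally show "\<bar>M (i # ys)\<bar> \<le> R i - A (i # ys)" by simp
    qed
    also have "\<dots> = (\<Sum>ys\<in>T - {replicate (m - 1) i}. R i) - (\<Sum>ys\<in>T - {replicate (m - 1) i}. A (i # ys))"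
      by (simp add: sum_subtractf)
    also have "(\<Sum>ys\<in>T - {replicate (m - 1) i}. R i) = N * R i - R i"
    proof -
      have "card T \<ge> 1" using finT repT card_gt_0_iff by (metis One_nat_def Suc_leI empty_iff)
      thus ?thesis using finT repT by (simp add: sum_diff1 N_def of_nat_diff algebra_simps)
    qed
    also have "(\<Sum>ys\<in>T - {replicate (m - 1) i}. A (i # ys)) = S i - A (replicate m i)"
      using finT repT replicate_Suc_pred[OF m, of i] by (simp add: sum_diff1 S_def)
    finally show ?thesis .
  qed
  have Npos: "N > 0" if "i \<in> {1..n}" for i
    unfolding N using that by simp
  have DD: "diag_dominated m n M" if B0: "B0_tensor m n A"
    unfolding diag_dominated_def
  proof
    fix i assume i: "i \<in> {1..n}"
    have "R i \<le> S i / N"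
    proof (rule R_le)
      show "S i / N \<ge> 0" using B0 i Npos[OF i] unfolding B0_tensor_def S_def T_def by simp
      show "\<forall>ys\<in>T. ys \<noteq> replicate (m - 1) i \<longrightarrow> A (i # ys) \<le> S i / N"
        using B0 i unfolding B0_tensor_def S_def T_def N by simp
    qed
    hence "N * R i \<le> S i" using Npos[OF i] by (simp add: field_simps)
    thus "M (replicate m i) \<ge> (\<Sum>ys\<in>tensor_idx (m - 1) n - {replicate (m - 1) i}. \<bar>M (i # ys)\<bar>)"
      using offsum[OF i] Mrep[of i] unfolding T_def by simp
  qed
  have SDD: "strictly_diag_dominated m n M" if B: "B_tensor m n A"
    unfolding strictly_diag_dominated_def
  proof
    fix i assume i: "i \<in> {1..n}"
    have Spos: "S i > 0" using B i unfolding B_tensor_def S_def T_def by simp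
    have lt: "\<forall>ys\<in>T. ys \<noteq> replicate (m - 1) i \<longrightarrow> A (i # ys) < S i / N"
      using B i unfolding B_tensor_def S_def T_def N by simp
    have "R i < S i / N"
    proof -
      have "R i \<in> insert 0 ((\<lambda>ys. A (i # ys)) ` (T - {replicate (m - 1) i}))"
        unfolding R_def using fin_img by (intro Max_in) auto
      moreover have "S i / N > 0" using Spos Npos[OF i] by simp
      ultimately show ?thesis using lt by auto
    qed
    hence "N * R i < S i" using Npos[OF i] by (simp add: field_simps)
    thus "M (replicate m i) > (\<Sum>ys\<in>tensor_idx (m - 1) n - {replicate (m - 1) i}. \<bar>M (i # ys)\<bar>)"
      using offsum[OF i] Mrep[of i] unfolding T_def by simp
  qed
  obtain s h J where
    d1: "\<forall>k\<in>{1..s}. h k > 0 \<and> J k \<subseteq> {i\<in>{1..n}. R i > 0}" and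
    d2: "\<forall>k\<in>{1..<s}. J (Suc k) \<subset> J k" and
    d3: "\<forall>X. X \<subseteq> {1..n} \<longrightarrow> X \<noteq> {} \<longrightarrow>
           (\<Sum>k=1..s. h k * (if X \<subseteq> J k then 1 else 0)) = Min (R ` X)"
    using decomp_exists[of "{1..n}" R] R_nn by auto
  have sumeq: "(\<Sum>k=1..s. h k * all_one_tensor (J k) xs) = Min (R ` set xs)"
    if "xs \<in> tensor_idx m n" for xs
    using d3 setne[OF that] setsub[OF that] unfolding all_one_tensor_def by simp
  have main: "(Z_tensor m n A \<and> P m n A) \<or> (\<exists>M. Z_tensor m n M \<and> P m n M \<and> decomposes m n A M)"
    if PM: "P m n M" and Pcong: "\<forall>xs\<in>tensor_idx m n. M xs = A xs \<Longrightarrow> P m n M = P m n A" for P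
  proof (cases "s = 0")
    case True
    have "\<forall>xs\<in>tensor_idx m n. M xs = A xs"
      using sumeq True unfolding M_def by simp
    hence "Z_tensor m n A \<and> P m n A" using ZM PM Pcong Z_cong by metis
    thus ?thesis by blast
  next
    case False
    have "decomposes m n A M" unfolding decomposes_def
    proof (intro exI[of _ s] exI[of _ h] exI[of _ J] conjI ballI)
      show "s > 0" using False by simp
      fix k assume k: "k \<in> {1..s}"
      show "h k > 0" using d1 k by blast
      show "J k \<subseteq> {1..n}" using d1 k by blast
    next
      fix k assume "k \<in> {1..<s}" thus "J (Suc k) \<subset> J k" using d2 by auto
    next
      fix xs assume "xs \<in> tensor_idx m n"
      thus "A xs = M xs + (\<Sum>k=1..s. h k * all_one_tensor (J k) xs)"
        using sumeq unfolding M_def by simp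
    qed
    thus ?thesis using ZM PM by blast
  qed
  show ?thesis
  proof (intro conjI impI)
    assume "B0_tensor m n A"
    thus "(Z_tensor m n A \<and> diag_dominated m n A) \<or>
            (\<exists>M. Z_tensor m n M \<and> diag_dominated m n M \<and> decomposes m n A M)"
      using main[of diag_dominated] DD dd_cong(1)[OF m] by blast
  next
    assume "B_tensor m n A"
    thus "(Z_tensor m n A \<and> strictly_diag_dominated m n A) \<or>
            (\<exists>M. Z_tensor m n M \<and> strictly_diag_dominated m n M \<and> decomposes m n A M)"
      using main[of strictly_diag_dominated] SDD dd_cong(2)[OF m] by blast
  qed
qed

end
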